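(* Let $p\geq 5$ and $p'=p+2$ both be prime, and put $a=\frac{p+1}{6}$. Then for every integer $n\geq 0$ the numbers $pp'(2n+1)\pm 4a$ are positive, and $$p[p'(2n+1)+4a]+4a=p'[p(2n+1)+4a]-4\tfrac{p'-1}{6}>0,$$ $$p[p'(2n+1)-4a]-4a=p'[p(2n+1)-4a]+4\tfrac{p'-1}{6}>0.$$ All these numbers are common non-ranks of $p$ and $p'$: each of them is a non-rank and can be written both as $kp\pm 4N(p/6)$ and as $k'p'\pm 4N(p'/6)$ with $k,k'$ positive odd integers.
   Context: $N(x)$ denotes the integer nearest to the real number $x$. An odd integer $t\geq 3$ is a twin-4 rank if $3t-2$ and $3t+2$ are both prime, and a non-rank otherwise. *)

theory Defs
  imports Complex_Main "HOL-Computational_Algebra.Primes"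
begin

text \<open>N(x): the integer nearest to x (ties rounded up; ties never occur in our use).\<close>
definition nearest_int :: "real \<Rightarrow> int" where
  "nearest_int x = \<lfloor>x + 1/2\<rfloor>"

definition twin4_rank :: "int \<Rightarrow> bool" where
  "twin4_rank t \<longleftrightarrow> odd t \<and> t \<ge> 3 \<and> prime (3*t - 2) \<and> prime (3*t + 2)"

definition non_rank :: "int \<Rightarrow> bool" where
  "non_rank t \<longleftrightarrow> odd t \<and> t \<ge> 3 \<and> \<not> twin4_rank t"

definition rep_form :: "int \<Rightarrow> int \<Rightarrow> bool" where
  "rep_form q X \<longleftrightarrow> (\<exists>k::int. k > 0 \<and> odd k \<and>
      (X = k*q + 4 * nearest_int (real_of_int q / 6) \<or> X = k*q - 4 * nearest_int (real_of_int q / 6)))"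

definition common_non_rank :: "int \<Rightarrow> int \<Rightarrow> int \<Rightarrow> bool" where
  "common_non_rank q q' X \<longleftrightarrow> non_rank X \<and> rep_form q X \<and> rep_form q' X"

end

theory Submission
  imports Defs
begin

lemma not_prime_mult: "(x::int) > 1 \<Longrightarrow> y > 1 \<Longrightarrow> \<not> prime (x*y)"
  by (simp add: prime_int_iff) (metis dual_order.strict_trans less_irrefl dvd_triv_left
      less_1_mult mult.right_neutral mult_less_cancel_left_pos zero_le_one order.order_iff_strict)

lemma N1: "nearest_int (real_of_int (6*a - 1) / 6) = a"
  unfolding nearest_int_def by (simp add: floor_eq_iff field_simps)
lemma N2: "nearest_int (real_of_int (6*a - 1 + 2) / 6) = a"
  unfolding nearest_int_def by (simp add: floor_eq_iff field_simps)

lemma p6: assumes "prime (p::int)" "p \<ge> 5" "prime (p + 2)" shows "p mod 6 = 5"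
proof -
  have P: "\<And>m q. prime (q::int) \<Longrightarrow> m \<ge> 0 \<Longrightarrow> m dvd q \<Longrightarrow> m = 1 \<or> m = q"
    by (simp add: prime_int_iff)
  have a: "\<not> 2 dvd p" using P[of p 2] assms(1,2) by auto
  have b: "\<not> 3 dvd p" using P[of p 3] assms(1,2) by auto
  have c: "\<not> 3 dvd (p+2)" using P[of "p+2" 3] assms(3,2) by auto
  show ?thesis using a b c by presburger
qed

lemma nonrank_m: assumes "prime p" "p > 1" "X \<ge> 3" "odd X" "3*X - 2 = p*c \<or> 3*X + 2 = p*c" "c > 1"
  shows "non_rank X"
  using assms not_prime_mult[of p c] unfolding non_rank_def twin4_rank_def by auto

lemma repP: "k > 0 \<Longrightarrow> odd k \<Longrightarrow> N = nearest_int (real_of_int q / 6) \<Longrightarrow> X = k*q + 4*N \<Longrightarrow> rep_form q X"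
  unfolding rep_form_def by blast
lemma repM: "k > 0 \<Longrightarrow> odd k \<Longrightarrow> N = nearest_int (real_of_int q / 6) \<Longrightarrow> X = k*q - 4*N \<Longrightarrow> rep_form q X"
  unfolding rep_form_def by blast

lemma main:
  fixes a m :: int
  assumes pa: "p = 6*a - 1" and p'a: "p' = p + 2" and a1: "a \<ge> 1" and m1: "m \<ge> 1" and mo: "odd m"
    and pr: "prime p" and pr': "prime p'"
  shows "p * p' * m + 4 * a > 0 \<and> p * p' * m - 4 * a > 0 \<and>
     p * (p' * m + 4 * a) + 4 * a = p' * (p * m + 4 * a) - 4 * a \<and>
     p * (p' * m + 4 * a) + 4 * a > 0 \<and>
     p * (p' * m - 4 * a) - 4 * a = p' * (p * m - 4 * a) + 4 * a \<and>
     p * (p' * m - 4 * a) - 4 * a > 0 \<and>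
     common_non_rank p p' (p * p' * m + 4 * a) \<and>
     common_non_rank p p' (p * p' * m - 4 * a) \<and>
     common_non_rank p p' (p * (p' * m + 4 * a) + 4 * a) \<and>
     common_non_rank p p' (p * (p' * m - 4 * a) - 4 * a)"
proof -
  have Np: "nearest_int (real_of_int p / 6) = a" using N1 pa by simp
  have Np': "nearest_int (real_of_int p' / 6) = a" using N2 pa p'a by simp
  have p5: "p \<ge> 5" using pa a1 by simp
  have p'7: "p' \<ge> 7" using p'a p5 by simp
  have op: "odd p" using pa by presburger
  have op': "odd p'" using p'a op by simp
  have pm: "p * m \<ge> p" using m1 p5 by simp
  have p'm: "p' * m \<ge> p'" using m1 p'7 by simp
  have ppm: "p * (p' * m) \<ge> 5 * p'" using p'm p5 p'7 mult_mono[of 5 p p' "p'*m"] by auto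
  have ppm2: "p * p' * m = p * (p' * m)" by simp
  have ppm3: "p * p' * m = p' * (p * m)" by simp
  have o1: "odd (p' * m)" "odd (p * m)" using op op' mo by auto
  have o2: "odd (p' * m + 4*a)" "odd (p * m + 4*a)" "odd (p' * m - 4*a)" "odd (p * m - 4*a)"
    using o1 by (simp_all add: even_add)
  have k1: "p' * m - 4*a \<ge> 2*a+1" "p * m - 4*a \<ge> 1" using pm p'm pa p'a a1 by linarith+
  have k0: "p' * m + 4*a \<ge> 1" using p'm p'7 a1 by linarith
  have k1': "p * (p' * m - 4 * a) \<ge> 5 * (2*a+1)" using k1 p5 mult_mono[of 5 p "2*a+1" "p' * m - 4*a"] a1 by auto
  have k0': "p * (p' * m + 4 * a) \<ge> 5" using k0 p5 mult_mono[of 5 p 1 "p' * m + 4*a"] by auto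
  define X1 where "X1 = p * p' * m + 4 * a"
  define X2 where "X2 = p * p' * m - 4 * a"
  define X3 where "X3 = p * (p' * m + 4 * a) + 4 * a"
  define X4 where "X4 = p * (p' * m - 4 * a) - 4 * a"
  have e3: "X3 = p' * (p * m + 4 * a) - 4 * a" unfolding X3_def p'a pa by (simp add: algebra_simps)
  have e4: "X4 = p' * (p * m - 4 * a) + 4 * a" unfolding X4_def p'a pa by (simp add: algebra_simps)
  have k1'': "p * (p' * m - 4 * a) \<ge> 10*a+5" using k1' by simp
  have g1: "X1 \<ge> 3" unfolding X1_def ppm2 using ppm p'7 a1 by linarith
  have g2: "X2 \<ge> 3" unfolding X2_def ppm2 using ppm p'a pa a1 by linarith
  have g3: "X3 \<ge> 3" unfolding X3_def using k0' a1 by linarith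
  have g4: "X4 \<ge> 3" unfolding X4_def using k1'' a1 by linarith
  note g = g1 g2 g3 g4
  have od: "odd X1" "odd X2" "odd X3" "odd X4"
    unfolding X1_def X2_def X3_def X4_def using ppm2 op o1 o2 by (simp_all add: even_add even_diff)
  have c1: "3*X1 - 2 = p * (3*p'*m + 2)" unfolding X1_def pa by (simp add: algebra_simps)
  have c2: "3*X2 + 2 = p * (3*p'*m - 2)" unfolding X2_def pa by (simp add: algebra_simps)
  have c3: "3*X3 - 2 = p * (3*p'*m + 2*p + 4)" unfolding X3_def pa by (simp add: algebra_simps)
  have c4: "3*X4 + 2 = p * (3*p'*m - 2*p - 4)" unfolding X4_def pa by (simp add: algebra_simps)
  have t3: "3*p'*m \<ge> 21"
  proof -
    have "3*p'*m = 3*(p'*m)" by (simp add: mult.assoc)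
    thus ?thesis using p'm p'7 by linarith
  qed
  have t4: "3*p'*m \<ge> 3*p'"
  proof -
    have "3*p'*m = 3*(p'*m)" by (simp add: mult.assoc)
    thus ?thesis using p'm by linarith
  qed
  have u1: "3*p'*m + 2 > 1" "3*p'*m - 2 > 1" "3*p'*m + 2*p + 4 > 1" "3*p'*m - 2*p - 4 > 1"
    using t3 t4 p5 p'a by linarith+
  have n1: "non_rank X1" by (rule nonrank_m[OF pr _ g(1) od(1), of "3*p'*m + 2"]) (use c1 u1 p5 in simp_all)
  have n2: "non_rank X2" by (rule nonrank_m[OF pr _ g(2) od(2), of "3*p'*m - 2"]) (use c2 u1 p5 in simp_all)
  have n3: "non_rank X3" by (rule nonrank_m[OF pr _ g(3) od(3), of "3*p'*m + 2*p + 4"]) (use c3 u1 p5 in simp_all)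
  have n4: "non_rank X4" by (rule nonrank_m[OF pr _ g(4) od(4), of "3*p'*m - 2*p - 4"]) (use c4 u1 p5 in simp_all)
  have pm0: "p*m > 0" "p'*m > 0" using pm p'm p5 p'7 by linarith+
  have r1: "rep_form p X1 \<and> rep_form p' X1"
    by (rule conjI, rule repP[OF pm0(2) o1(1) Np[symmetric]], simp add: X1_def algebra_simps,
        rule repP[OF pm0(1) o1(2) Np'[symmetric]], simp add: X1_def algebra_simps)
  have r2: "rep_form p X2 \<and> rep_form p' X2"
    by (rule conjI, rule repM[OF pm0(2) o1(1) Np[symmetric]], simp add: X2_def algebra_simps,
        rule repM[OF pm0(1) o1(2) Np'[symmetric]], simp add: X2_def algebra_simps)
  have q3: "p' * m + 4*a > 0" "p * m + 4*a > 0" using pm0 a1 by linarith+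
  have q4: "p' * m - 4*a > 0" "p * m - 4*a > 0" using k1 a1 by linarith+
  have r3: "rep_form p X3 \<and> rep_form p' X3"
    by (rule conjI, rule repP[OF q3(1) o2(1) Np[symmetric]], simp add: X3_def algebra_simps,
        rule repM[OF q3(2) o2(2) Np'[symmetric]], simp add: e3 algebra_simps)
  have r4: "rep_form p X4 \<and> rep_form p' X4"
    by (rule conjI, rule repM[OF q4(1) o2(3) Np[symmetric]], simp add: X4_def algebra_simps,
        rule repP[OF q4(2) o2(4) Np'[symmetric]], simp add: e4 algebra_simps)
  show ?thesis using g e3 e4 n1 n2 n3 n4 r1 r2 r3 r4
    unfolding common_non_rank_def X1_def X2_def X3_def X4_def by auto
qed

theorem theorem3p8:
  fixes p :: int and n :: nat
  assumes "prime p" and "p \<ge> 5" and "prime (p + 2)"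
  shows "let p' = p + 2; a = (p + 1) div 6; m = 2 * int n + 1 in
     p * p' * m + 4 * a > 0 \<and> p * p' * m - 4 * a > 0 \<and>
     p * (p' * m + 4 * a) + 4 * a = p' * (p * m + 4 * a) - 4 * ((p' - 1) div 6) \<and>
     p * (p' * m + 4 * a) + 4 * a > 0 \<and>
     p * (p' * m - 4 * a) - 4 * a = p' * (p * m - 4 * a) + 4 * ((p' - 1) div 6) \<and>
     p * (p' * m - 4 * a) - 4 * a > 0 \<and>
     common_non_rank p p' (p * p' * m + 4 * a) \<and>
     common_non_rank p p' (p * p' * m - 4 * a) \<and>
     common_non_rank p p' (p * (p' * m + 4 * a) + 4 * a) \<and>
     common_non_rank p p' (p * (p' * m - 4 * a) - 4 * a)"
proof -
  have m6: "p mod 6 = 5" using p6 assms by blast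
  define a where "a = (p + 1) div 6"
  have pa: "p = 6*a - 1" unfolding a_def using m6 by presburger
  have a1: "a \<ge> 1" using pa assms(2) by linarith
  have d: "(p + 2 - 1) div 6 = a" using pa by simp
  have "odd (2 * int n + 1)" by simp
  note M = main[OF pa refl a1 _ this assms(1) assms(3)]
  show ?thesis unfolding Let_def d a_def[symmetric] by (rule M) simp
qed

end
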